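(* Let $\alpha,\beta>0$, let $c(\psi)=\sqrt{\alpha\cos^2\psi+\beta\sin^2\psi}$, let $p\ge0$ be an integer, let $C>0$ and $\theta\ge1/2$, and let $X_{\Delta x}^p(\Omega)$ be the discontinuous piecewise polynomial space on the periodic mesh described in the context. Suppose $v,w,\psi:[0,T]\to X_{\Delta x}^p(\Omega)$ are differentiable in time and, for every $t\in[0,T]$, satisfy (with $c=c(\psi(x,t))$ inside integrals, $x$-derivatives taken cellwise, sums over $j=1,\dots,N$) $$\sum_j\int_{\Omega_j}v_t\phi\,dx+\sum_j\int_{\Omega_j}c\,w\phi_x\,dx-\sum_j\Big(\overline{c}_{j+1/2}\overline{w}_{j+1/2}+\tfrac12 s_{j+1/2}\llbracket v\rrbracket_{j+1/2}\Big)\phi^-_{j+1/2}+\sum_j\Big(\overline{c}_{j-1/2}\overline{w}_{j-1/2}+\tfrac12 s_{j-1/2}\llbracket v\rrbracket_{j-1/2}\Big)\phi^+_{j-1/2}$$ $$=\sum_j\int_{\Omega_j}c\,(w\phi)_x\,dx-\sum_j\overline{c}_{j+1/2}w^-_{j+1/2}\phi^-_{j+1/2}+\sum_j\overline{c}_{j-1/2}w^+_{j-1/2}\phi^+_{j-1/2}-\sum_j\varepsilon_j\int_{\Omega_j}v_x\phi_x\,dx$$ for all $\phi\in X_{\Delta x}^p(\Omega)$, $$\sum_j\int_{\Omega_j}w_t\eta\,dx+\sum_j\int_{\Omega_j}c\,v\eta_x\,dx-\sum_j\Big(\overline{c}_{j+1/2}\overline{v}_{j+1/2}+\tfrac12 s_{j+1/2}\llbracket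 w\rrbracket_{j+1/2}\Big)\eta^-_{j+1/2}+\sum_j\Big(\overline{c}_{j-1/2}\overline{v}_{j-1/2}+\tfrac12 s_{j-1/2}\llbracket w\rrbracket_{j-1/2}\Big)\eta^+_{j-1/2}=-\sum_j\varepsilon_j\int_{\Omega_j}w_x\eta_x\,dx$$ for all $\eta\in X_{\Delta x}^p(\Omega)$, and $\sum_j\int_{\Omega_j}\psi_t\zeta\,dx=\sum_j\int_{\Omega_j}v\zeta\,dx$ for all $\zeta\in X_{\Delta x}^p(\Omega)$. Here $s_{j+1/2}=\max\{c^-_{j+1/2},c^+_{j+1/2}\}$ and $$\varepsilon_j=\frac{\Delta x_j\,C\,\big(\int_{\Omega_j}\mathrm{Res}^2\,dx\big)^{1/2}}{\big(\int_{\Omega_j}(v_x^2+w_x^2)\,dx\big)^{1/2}+\Delta x_j^\theta},\qquad \mathrm{Res}=(v^2+w^2)_t-\big(2c(\psi)vw\big)_x.$$ Then $$\frac{d}{dt}\left(\sum_{j=1}^N\int_{\Omega_j}\frac{v^2+w^2}{2}\,dx\right)\le 0.$$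
   Context: The domain $\Omega$ is partitioned into cells $\Omega_j=[x_{j-1/2},x_{j+1/2}]$, $j=1,\dots,N$, with $\Delta x_j=x_{j+1/2}-x_{j-1/2}$. $X_{\Delta x}^p(\Omega)=\{u\in L^2(\Omega): u|_{\Omega_j}$ is a polynomial of degree $\le p$ for each $j\}$. For a grid function $u$, $u^+_{j+1/2}$ and $u^-_{j+1/2}$ denote its traces at $x_{j+1/2}$ from the right and left respectively; $\overline{u}_{j+1/2}=(u^+_{j+1/2}+u^-_{j+1/2})/2$ and $\llbracket u\rrbracket_{j+1/2}=u^+_{j+1/2}-u^-_{j+1/2}$. Also $c^\pm_{j+1/2}=c(\psi^\pm_{j+1/2})$ and $\overline{c}_{j+1/2}=(c^+_{j+1/2}+c^-_{j+1/2})/2$. Periodic boundary conditions: the endpoints $x_{1/2}$ and $x_{N+1/2}$ are identified, i.e. $u^-_{1/2}:=u^-_{N+1/2}$ (trace from cell $N$) and $u^+_{N+1/2}:=u^+_{1/2}$ (trace from cell $1$), for all grid functions including $\psi$ and the test functions. *)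

theory Defs
  imports "HOL-Analysis.Analysis" "HOL-Computational_Algebra.Polynomial"
begin

text \<open>Mesh: nodes xp k = x_{k+1/2}, k = 0..N; cell j (j = 1..N) is [xp (j-1), xp j].
A grid function in X^p is represented by its polynomial pieces u :: nat => real poly,
u j being the polynomial on cell j.\<close>

definition cspeed :: "real \<Rightarrow> real \<Rightarrow> real \<Rightarrow> real" where
  "cspeed \<alpha> \<beta> \<psi> = sqrt (\<alpha> * (cos \<psi>)\<^sup>2 + \<beta> * (sin \<psi>)\<^sup>2)"

definition inXp :: "nat \<Rightarrow> nat \<Rightarrow> (nat \<Rightarrow> real poly) \<Rightarrow> bool" where
  "inXp N p u \<longleftrightarrow> (\<forall>j\<in>{1..N}. degree (u j) \<le> p)"

definition dx :: "(nat \<Rightarrow> real) \<Rightarrow> nat \<Rightarrow> real" where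
  "dx xp j = xp j - xp (j - 1)"

definition cint :: "(nat \<Rightarrow> real) \<Rightarrow> nat \<Rightarrow> (real \<Rightarrow> real) \<Rightarrow> real" where
  "cint xp j f = integral {xp (j - 1)..xp j} f"

definition trm :: "(nat \<Rightarrow> real) \<Rightarrow> nat \<Rightarrow> (nat \<Rightarrow> real poly) \<Rightarrow> nat \<Rightarrow> real" where
  "trm xp N u k = (if k = 0 then poly (u N) (xp N) else poly (u k) (xp k))"

definition trp :: "(nat \<Rightarrow> real) \<Rightarrow> nat \<Rightarrow> (nat \<Rightarrow> real poly) \<Rightarrow> nat \<Rightarrow> real" where
  "trp xp N u k = (if k = N then poly (u 1) (xp 0) else poly (u (Suc k)) (xp k))"

definition avg :: "(nat \<Rightarrow> real) \<Rightarrow> nat \<Rightarrow> (nat \<Rightarrow> real poly) \<Rightarrow> nat \<Rightarrow> real" where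
  "avg xp N u k = (trp xp N u k + trm xp N u k) / 2"

definition jump :: "(nat \<Rightarrow> real) \<Rightarrow> nat \<Rightarrow> (nat \<Rightarrow> real poly) \<Rightarrow> nat \<Rightarrow> real" where
  "jump xp N u k = trp xp N u k - trm xp N u k"

definition cp :: "real \<Rightarrow> real \<Rightarrow> (nat \<Rightarrow> real) \<Rightarrow> nat \<Rightarrow> (nat \<Rightarrow> real poly) \<Rightarrow> nat \<Rightarrow> real" where
  "cp \<alpha> \<beta> xp N \<psi> k = cspeed \<alpha> \<beta> (trp xp N \<psi> k)"

definition cm :: "real \<Rightarrow> real \<Rightarrow> (nat \<Rightarrow> real) \<Rightarrow> nat \<Rightarrow> (nat \<Rightarrow> real poly) \<Rightarrow> nat \<Rightarrow> real" where
  "cm \<alpha> \<beta> xp N \<psi> k = cspeed \<alpha> \<beta> (trm xp N \<psi> k)"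

definition cavg :: "real \<Rightarrow> real \<Rightarrow> (nat \<Rightarrow> real) \<Rightarrow> nat \<Rightarrow> (nat \<Rightarrow> real poly) \<Rightarrow> nat \<Rightarrow> real" where
  "cavg \<alpha> \<beta> xp N \<psi> k = (cp \<alpha> \<beta> xp N \<psi> k + cm \<alpha> \<beta> xp N \<psi> k) / 2"

definition smax :: "real \<Rightarrow> real \<Rightarrow> (nat \<Rightarrow> real) \<Rightarrow> nat \<Rightarrow> (nat \<Rightarrow> real poly) \<Rightarrow> nat \<Rightarrow> real" where
  "smax \<alpha> \<beta> xp N \<psi> k = max (cm \<alpha> \<beta> xp N \<psi> k) (cp \<alpha> \<beta> xp N \<psi> k)"

definition flux :: "real \<Rightarrow> real \<Rightarrow> (nat \<Rightarrow> real) \<Rightarrow> nat \<Rightarrow> (nat \<Rightarrow> real poly)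
     \<Rightarrow> (nat \<Rightarrow> real poly) \<Rightarrow> (nat \<Rightarrow> real poly) \<Rightarrow> nat \<Rightarrow> real" where
  "flux \<alpha> \<beta> xp N \<psi> a b k =
     cavg \<alpha> \<beta> xp N \<psi> k * avg xp N a k + smax \<alpha> \<beta> xp N \<psi> k * jump xp N b k / 2"

definition Res :: "real \<Rightarrow> real \<Rightarrow> (nat \<Rightarrow> real poly) \<Rightarrow> (nat \<Rightarrow> real poly) \<Rightarrow> (nat \<Rightarrow> real poly)
     \<Rightarrow> (nat \<Rightarrow> real poly) \<Rightarrow> (nat \<Rightarrow> real poly) \<Rightarrow> nat \<Rightarrow> real \<Rightarrow> real" where
  "Res \<alpha> \<beta> \<psi> v w vt wt j x =
     2 * poly (v j) x * poly (vt j) x + 2 * poly (w j) x * poly (wt j) x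
     - deriv (\<lambda>y. 2 * cspeed \<alpha> \<beta> (poly (\<psi> j) y) * poly (v j) y * poly (w j) y) x"

definition visc :: "real \<Rightarrow> real \<Rightarrow> real \<Rightarrow> real \<Rightarrow> (nat \<Rightarrow> real) \<Rightarrow> (nat \<Rightarrow> real poly)
     \<Rightarrow> (nat \<Rightarrow> real poly) \<Rightarrow> (nat \<Rightarrow> real poly) \<Rightarrow> (nat \<Rightarrow> real poly) \<Rightarrow> (nat \<Rightarrow> real poly)
     \<Rightarrow> nat \<Rightarrow> real" where
  "visc \<alpha> \<beta> C \<theta> xp \<psi> v w vt wt j =
     dx xp j * C * sqrt (cint xp j (\<lambda>x. (Res \<alpha> \<beta> \<psi> v w vt wt j x)\<^sup>2))
     / (sqrt (cint xp j (\<lambda>x. (poly (pderiv (v j)) x)\<^sup>2 + (poly (pderiv (w j)) x)\<^sup>2))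
        + dx xp j powr \<theta>)"

end

theory Submission
  imports Defs "HOL-Computational_Algebra.Polynomial"
begin

lemma poly_sum_bound:
  fixes P :: "real poly"
  assumes "degree P \<le> M"
  shows "poly P x = (\<Sum>k\<le>M. coeff P k * x ^ k)"
proof -
  have "poly P x = (\<Sum>k\<le>degree P. coeff P k * x ^ k)" by (rule poly_altdef)
  also have "\<dots> = (\<Sum>k\<le>M. coeff P k * x ^ k)"
    by (rule sum.mono_neutral_left) (use assms le_degree in auto)
  finally show ?thesis .
qed

lemma int_poly_sum:
  fixes P :: "real poly"
  assumes "degree P \<le> M"
  shows "integral {a..b} (poly P) = (\<Sum>k\<le>M. coeff P k * integral {a..b} (\<lambda>x. x ^ k))"
proof -
  have "integral {a..b} (poly P) = integral {a..b} (\<lambda>x. \<Sum>k\<le>M. coeff P k * x ^ k)"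
    by (rule arg_cong[where f="integral {a..b}"]) (use poly_sum_bound[OF assms] in auto)
  also have "\<dots> = (\<Sum>k\<le>M. integral {a..b} (\<lambda>x. coeff P k * x ^ k))"
    by (rule integral_sum) (auto intro!: integrable_continuous_interval continuous_intros)
  also have "\<dots> = (\<Sum>k\<le>M. coeff P k * integral {a..b} (\<lambda>x. x ^ k))"
    by simp
  finally show ?thesis .
qed

lemma deriv_int_poly:
  fixes P :: "real \<Rightarrow> real poly"
  assumes deg: "\<forall>s\<in>S. degree (P s) \<le> M" and deg': "degree P' \<le> M" and t: "t \<in> S"
    and d: "\<And>k. ((\<lambda>s. coeff (P s) k) has_real_derivative coeff P' k) (at t within S)"
  shows "((\<lambda>s. integral {a..b} (poly (P s))) has_real_derivative integral {a..b} (poly P')) (at t within S)"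
proof -
  have "((\<lambda>s. \<Sum>k\<le>M. coeff (P s) k * integral {a..b} (\<lambda>x. x ^ k)) has_real_derivative
        (\<Sum>k\<le>M. coeff P' k * integral {a..b} (\<lambda>x. x ^ k))) (at t within S)"
    by (intro DERIV_sum DERIV_cmult_right d)
  then have "((\<lambda>s. \<Sum>k\<le>M. coeff (P s) k * integral {a..b} (\<lambda>x. x ^ k)) has_real_derivative
        integral {a..b} (poly P')) (at t within S)"
    using int_poly_sum[OF deg'] by simp
  then show ?thesis
    by (rule has_field_derivative_transform_within[where d=1]) (use t deg int_poly_sum in auto)
qed

lemma deriv_energy:
  fixes P :: "real \<Rightarrow> real poly"
  assumes deg: "\<forall>s\<in>S. degree (P s) \<le> p" and t: "t \<in> S"
    and d: "\<And>k. ((\<lambda>s. coeff (P s) k) has_real_derivative coeff Pt k) (at t within S)"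
  shows "((\<lambda>s. integral {a..b} (\<lambda>x. (poly (P s) x)\<^sup>2 / 2)) has_real_derivative
           integral {a..b} (\<lambda>x. poly Pt x * poly (P t) x)) (at t within S)"
proof -
  define Q where "Q s = smult (1/2) (P s * P s)" for s
  have c: "((\<lambda>s. coeff (Q s) n) has_real_derivative coeff (Pt * P t) n) (at t within S)" for n
  proof -
    have "((\<lambda>s. (1/2) * (\<Sum>i\<le>n. coeff (P s) i * coeff (P s) (n-i))) has_real_derivative
       (1/2) * (\<Sum>i\<le>n. coeff Pt i * coeff (P t) (n-i) + coeff (P t) i * coeff Pt (n-i))) (at t within S)"
      by (intro DERIV_cmult DERIV_sum) (auto intro!: derivative_eq_intros d)
    moreover have "(\<Sum>i\<le>n. coeff Pt i * coeff (P t) (n-i) + coeff (P t) i * coeff Pt (n-i))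
       = coeff (Pt * P t) n + coeff (P t * Pt) n"
      by (simp add: coeff_mult sum.distrib)
    ultimately show ?thesis by (simp add: Q_def coeff_mult mult.commute[of "P t" Pt])
  qed
  have "((\<lambda>s. integral {a..b} (poly (Q s))) has_real_derivative integral {a..b} (poly (Pt * P t))) (at t within S)"
  proof (rule deriv_int_poly[where M="2*p + degree Pt"])
    show "\<forall>s\<in>S. degree (Q s) \<le> 2 * p + degree Pt"
    proof
      fix s assume "s \<in> S"
      have "degree (Q s) \<le> degree (P s) + degree (P s)"
        unfolding Q_def by (metis degree_mult_le degree_smult_le order_trans)
      then show "degree (Q s) \<le> 2 * p + degree Pt" using deg \<open>s\<in>S\<close> by fastforce
    qed
    show "degree (Pt * P t) \<le> 2 * p + degree Pt"
      using degree_mult_le[of Pt "P t"] deg t by fastforce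
  qed (use t c in auto)
  moreover have "(\<lambda>x. (poly (P s) x)\<^sup>2 / 2) = poly (Q s)" for s
    by (auto simp: Q_def power2_eq_square)
  moreover have "(\<lambda>x. poly Pt x * poly (P t) x) = poly (Pt * P t)" by auto
  ultimately show ?thesis by simp
qed

lemma sum_shift_periodic:
  fixes f :: "nat \<Rightarrow> real"
  assumes "N \<ge> 1" "f 0 = f N"
  shows "(\<Sum>j=1..N. f (j - 1)) = (\<Sum>j=1..N. f j)"
proof -
  obtain m where N: "N = Suc m" using assms by (cases N) auto
  have "(\<Sum>j=1..Suc m. f (j - 1)) = (\<Sum>i=0..m. f i)"
    using sum.shift_bounds_cl_Suc_ivl[of "\<lambda>j. f (j - 1)" 0 m] by simp
  also have "\<dots> = f 0 + (\<Sum>i=1..m. f i)" by (simp add: sum.atLeast_Suc_atMost)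
  also have "\<dots> = (\<Sum>i=1..Suc m. f i)" using assms N by simp
  finally show ?thesis using N by simp
qed


lemma integral_nonneg_any:
  fixes f :: "real \<Rightarrow> real"
  assumes "\<And>x. 0 \<le> f x"
  shows "0 \<le> integral S f"
proof (cases "f integrable_on S")
  case True then show ?thesis by (rule integral_nonneg) (use assms in auto)
next
  case False then show ?thesis by (simp add: not_integrable_integral)
qed

lemma trm0: "trm xp N u 0 = trm xp N u N"
  by (simp add: trm_def)

lemma trp0: "N \<ge> 1 \<Longrightarrow> trp xp N u 0 = trp xp N u N"
  by (simp add: trp_def)

lemma cspeed_nonneg: "0 \<le> \<alpha> \<Longrightarrow> 0 \<le> \<beta> \<Longrightarrow> 0 \<le> cspeed \<alpha> \<beta> x"
  unfolding cspeed_def by (intro real_sqrt_ge_zero add_nonneg_nonneg mult_nonneg_nonneg) auto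

lemma cont_cspeed: "continuous_on A (\<lambda>x. cspeed \<alpha> \<beta> (poly P x))"
  unfolding cspeed_def by (intro continuous_intros)


theorem proposition2p4:
  fixes \<alpha> \<beta> C \<theta> T :: real and p N :: nat and xp :: "nat \<Rightarrow> real"
    and v w \<psi> vt wt \<psi>t :: "real \<Rightarrow> nat \<Rightarrow> real poly"
  assumes "\<alpha> > 0" "\<beta> > 0" "C > 0" "\<theta> \<ge> 1/2"
    and "N \<ge> 1" and "strict_mono_on {0..N} xp"
    and "\<forall>t\<in>{0..T}. inXp N p (v t) \<and> inXp N p (w t) \<and> inXp N p (\<psi> t)"
    and "\<forall>t\<in>{0..T}. \<forall>j\<in>{1..N}. \<forall>k.
           ((\<lambda>s. coeff (v s j) k) has_real_derivative coeff (vt t j) k) (at t within {0..T}) \<and>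
           ((\<lambda>s. coeff (w s j) k) has_real_derivative coeff (wt t j) k) (at t within {0..T}) \<and>
           ((\<lambda>s. coeff (\<psi> s j) k) has_real_derivative coeff (\<psi>t t j) k) (at t within {0..T})"
    and "\<forall>t\<in>{0..T}. \<forall>\<phi>. inXp N p \<phi> \<longrightarrow>
           (\<Sum>j=1..N. cint xp j (\<lambda>x. poly (vt t j) x * poly (\<phi> j) x))
         + (\<Sum>j=1..N. cint xp j (\<lambda>x. cspeed \<alpha> \<beta> (poly (\<psi> t j) x) * poly (w t j) x * poly (pderiv (\<phi> j)) x))
         - (\<Sum>j=1..N. flux \<alpha> \<beta> xp N (\<psi> t) (w t) (v t) j * trm xp N \<phi> j)
         + (\<Sum>j=1..N. flux \<alpha> \<beta> xp N (\<psi> t) (w t) (v t) (j - 1) * trp xp N \<phi> (j - 1))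
         = (\<Sum>j=1..N. cint xp j (\<lambda>x. cspeed \<alpha> \<beta> (poly (\<psi> t j) x) * poly (pderiv (w t j * \<phi> j)) x))
         - (\<Sum>j=1..N. cavg \<alpha> \<beta> xp N (\<psi> t) j * trm xp N (w t) j * trm xp N \<phi> j)
         + (\<Sum>j=1..N. cavg \<alpha> \<beta> xp N (\<psi> t) (j - 1) * trp xp N (w t) (j - 1) * trp xp N \<phi> (j - 1))
         - (\<Sum>j=1..N. visc \<alpha> \<beta> C \<theta> xp (\<psi> t) (v t) (w t) (vt t) (wt t) j *
                        cint xp j (\<lambda>x. poly (pderiv (v t j)) x * poly (pderiv (\<phi> j)) x))"
    and "\<forall>t\<in>{0..T}. \<forall>\<eta>. inXp N p \<eta> \<longrightarrow>
           (\<Sum>j=1..N. cint xp j (\<lambda>x. poly (wt t j) x * poly (\<eta> j) x))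
         + (\<Sum>j=1..N. cint xp j (\<lambda>x. cspeed \<alpha> \<beta> (poly (\<psi> t j) x) * poly (v t j) x * poly (pderiv (\<eta> j)) x))
         - (\<Sum>j=1..N. flux \<alpha> \<beta> xp N (\<psi> t) (v t) (w t) j * trm xp N \<eta> j)
         + (\<Sum>j=1..N. flux \<alpha> \<beta> xp N (\<psi> t) (v t) (w t) (j - 1) * trp xp N \<eta> (j - 1))
         = - (\<Sum>j=1..N. visc \<alpha> \<beta> C \<theta> xp (\<psi> t) (v t) (w t) (vt t) (wt t) j *
                        cint xp j (\<lambda>x. poly (pderiv (w t j)) x * poly (pderiv (\<eta> j)) x))"
    and "\<forall>t\<in>{0..T}. \<forall>\<zeta>. inXp N p \<zeta> \<longrightarrow>
           (\<Sum>j=1..N. cint xp j (\<lambda>x. poly (\<psi>t t j) x * poly (\<zeta> j) x))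
         = (\<Sum>j=1..N. cint xp j (\<lambda>x. poly (v t j) x * poly (\<zeta> j) x))"
  shows "\<forall>t\<in>{0..T}. \<exists>D.
           ((\<lambda>s. \<Sum>j=1..N. cint xp j (\<lambda>x. ((poly (v s j) x)\<^sup>2 + (poly (w s j) x)\<^sup>2) / 2))
              has_real_derivative D) (at t within {0..T}) \<and> D \<le> 0"
proof
  fix t assume t: "t \<in> {0..T}"
  note A = assms
  have ab: "0 \<le> \<alpha>" "0 \<le> \<beta>" using A(1,2) by auto
  have inX: "inXp N p (v t)" "inXp N p (w t)" using A(7) t by auto
  have xlt: "xp (j - 1) < xp j" if "j \<in> {1..N}" for j
    using that by (intro strict_mono_onD[OF A(6)]) auto
  define I1 where "I1 = (\<Sum>j=1..N. cint xp j (\<lambda>x. poly (vt t j) x * poly (v t j) x))"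
  define I2 where "I2 = (\<Sum>j=1..N. cint xp j (\<lambda>x. poly (wt t j) x * poly (w t j) x))"
  have Esplit: "(\<lambda>s. \<Sum>j=1..N. cint xp j (\<lambda>x. ((poly (v s j) x)\<^sup>2 + (poly (w s j) x)\<^sup>2) / 2))
     = (\<lambda>s. \<Sum>j=1..N. integral {xp (j-1)..xp j} (\<lambda>x. (poly (v s j) x)\<^sup>2 / 2)
                     + integral {xp (j-1)..xp j} (\<lambda>x. (poly (w s j) x)\<^sup>2 / 2))"
  proof (intro ext sum.cong refl)
    fix s j
    have "cint xp j (\<lambda>x. ((poly (v s j) x)\<^sup>2 + (poly (w s j) x)\<^sup>2) / 2)
        = integral {xp (j-1)..xp j} (\<lambda>x. (poly (v s j) x)\<^sup>2 / 2 + (poly (w s j) x)\<^sup>2 / 2)"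
      unfolding cint_def by (simp add: add_divide_distrib)
    also have "\<dots> = integral {xp (j-1)..xp j} (\<lambda>x. (poly (v s j) x)\<^sup>2 / 2)
                     + integral {xp (j-1)..xp j} (\<lambda>x. (poly (w s j) x)\<^sup>2 / 2)"
      by (rule integral_add) (auto intro!: integrable_continuous_interval continuous_intros)
    finally show "cint xp j (\<lambda>x. ((poly (v s j) x)\<^sup>2 + (poly (w s j) x)\<^sup>2) / 2)
        = integral {xp (j-1)..xp j} (\<lambda>x. (poly (v s j) x)\<^sup>2 / 2)
                     + integral {xp (j-1)..xp j} (\<lambda>x. (poly (w s j) x)\<^sup>2 / 2)" .
  qed
  have d2: "((\<lambda>s. \<Sum>j=1..N. integral {xp (j-1)..xp j} (\<lambda>x. (poly (v s j) x)\<^sup>2 / 2)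
                     + integral {xp (j-1)..xp j} (\<lambda>x. (poly (w s j) x)\<^sup>2 / 2))
      has_real_derivative (\<Sum>j=1..N. cint xp j (\<lambda>x. poly (vt t j) x * poly (v t j) x)
                                 + cint xp j (\<lambda>x. poly (wt t j) x * poly (w t j) x))) (at t within {0..T})"
    unfolding cint_def
  proof (rule DERIV_sum, rule DERIV_add)
    fix j assume j: "j \<in> {1..N}"
    show "((\<lambda>s. integral {xp (j-1)..xp j} (\<lambda>x. (poly (v s j) x)\<^sup>2 / 2)) has_real_derivative
           integral {xp (j-1)..xp j} (\<lambda>x. poly (vt t j) x * poly (v t j) x)) (at t within {0..T})"
      by (rule deriv_energy[where p=p]) (use A(7,8) t j in \<open>auto simp: inXp_def\<close>)
    show "((\<lambda>s. integral {xp (j-1)..xp j} (\<lambda>x. (poly (w s j) x)\<^sup>2 / 2)) has_real_derivative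
           integral {xp (j-1)..xp j} (\<lambda>x. poly (wt t j) x * poly (w t j) x)) (at t within {0..T})"
      by (rule deriv_energy[where p=p]) (use A(7,8) t j in \<open>auto simp: inXp_def\<close>)
  qed
  have deriv: "((\<lambda>s. \<Sum>j=1..N. cint xp j (\<lambda>x. ((poly (v s j) x)\<^sup>2 + (poly (w s j) x)\<^sup>2) / 2))
      has_real_derivative (\<Sum>j=1..N. cint xp j (\<lambda>x. poly (vt t j) x * poly (v t j) x)
                                 + cint xp j (\<lambda>x. poly (wt t j) x * poly (w t j) x))) (at t within {0..T})"
    by (subst Esplit) (rule d2)
  have Deq: "(\<Sum>j=1..N. cint xp j (\<lambda>x. poly (vt t j) x * poly (v t j) x)
                                 + cint xp j (\<lambda>x. poly (wt t j) x * poly (w t j) x)) = I1 + I2"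
    unfolding I1_def I2_def by (simp add: sum.distrib)
  note e1 = A(9)[rule_format, OF t inX(1)]
  note e2 = A(10)[rule_format, OF t inX(2)]
  have KR: "(\<Sum>j=1..N. cint xp j (\<lambda>x. cspeed \<alpha> \<beta> (poly (\<psi> t j) x) * poly (w t j) x * poly (pderiv (v t j)) x))
          + (\<Sum>j=1..N. cint xp j (\<lambda>x. cspeed \<alpha> \<beta> (poly (\<psi> t j) x) * poly (v t j) x * poly (pderiv (w t j)) x))
          = (\<Sum>j=1..N. cint xp j (\<lambda>x. cspeed \<alpha> \<beta> (poly (\<psi> t j) x) * poly (pderiv (w t j * v t j)) x))"
    unfolding sum.distrib[symmetric]
  proof (rule sum.cong[OF refl])
    fix j
    have "cint xp j (\<lambda>x. cspeed \<alpha> \<beta> (poly (\<psi> t j) x) * poly (w t j) x * poly (pderiv (v t j)) x)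
          + cint xp j (\<lambda>x. cspeed \<alpha> \<beta> (poly (\<psi> t j) x) * poly (v t j) x * poly (pderiv (w t j)) x)
        = integral {xp (j-1)..xp j} (\<lambda>x. cspeed \<alpha> \<beta> (poly (\<psi> t j) x) * poly (w t j) x * poly (pderiv (v t j)) x
          + cspeed \<alpha> \<beta> (poly (\<psi> t j) x) * poly (v t j) x * poly (pderiv (w t j)) x)"
      unfolding cint_def
      by (rule integral_add[symmetric])
         (auto intro!: integrable_continuous_interval continuous_intros cont_cspeed)
    also have "\<dots> = cint xp j (\<lambda>x. cspeed \<alpha> \<beta> (poly (\<psi> t j) x) * poly (pderiv (w t j * v t j)) x)"
      unfolding cint_def by (simp add: pderiv_mult algebra_simps)
    finally show "cint xp j (\<lambda>x. cspeed \<alpha> \<beta> (poly (\<psi> t j) x) * poly (w t j) x * poly (pderiv (v t j)) x)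
          + cint xp j (\<lambda>x. cspeed \<alpha> \<beta> (poly (\<psi> t j) x) * poly (v t j) x * poly (pderiv (w t j)) x)
          = cint xp j (\<lambda>x. cspeed \<alpha> \<beta> (poly (\<psi> t j) x) * poly (pderiv (w t j * v t j)) x)" .
  qed
  have per: "flux \<alpha> \<beta> xp N (\<psi> t) a b 0 = flux \<alpha> \<beta> xp N (\<psi> t) a b N"
     "cavg \<alpha> \<beta> xp N (\<psi> t) 0 = cavg \<alpha> \<beta> xp N (\<psi> t) N"
     "trp xp N u 0 = trp xp N u N" for a b u
    using A(5) by (simp_all add: flux_def cavg_def cp_def cm_def smax_def avg_def jump_def trm0 trp0)
  have sh1: "(\<Sum>j=1..N. flux \<alpha> \<beta> xp N (\<psi> t) (w t) (v t) (j - 1) * trp xp N (v t) (j - 1))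
           = (\<Sum>j=1..N. flux \<alpha> \<beta> xp N (\<psi> t) (w t) (v t) j * trp xp N (v t) j)"
    by (rule sum_shift_periodic[OF A(5)]) (simp add: per)
  have sh2: "(\<Sum>j=1..N. flux \<alpha> \<beta> xp N (\<psi> t) (v t) (w t) (j - 1) * trp xp N (w t) (j - 1))
           = (\<Sum>j=1..N. flux \<alpha> \<beta> xp N (\<psi> t) (v t) (w t) j * trp xp N (w t) j)"
    by (rule sum_shift_periodic[OF A(5)]) (simp add: per)
  have sh3: "(\<Sum>j=1..N. cavg \<alpha> \<beta> xp N (\<psi> t) (j - 1) * trp xp N (w t) (j - 1) * trp xp N (v t) (j - 1))
           = (\<Sum>j=1..N. cavg \<alpha> \<beta> xp N (\<psi> t) j * trp xp N (w t) j * trp xp N (v t) j)"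
    by (rule sum_shift_periodic[OF A(5)]) (simp add: per)
  have viscnn: "0 \<le> visc \<alpha> \<beta> C \<theta> xp (\<psi> t) (v t) (w t) (vt t) (wt t) j" if j: "j \<in> {1..N}" for j
  proof -
    have "0 < dx xp j" using xlt[OF j] by (simp add: dx_def)
    then show ?thesis unfolding visc_def cint_def using A(3)
      by (intro divide_nonneg_pos mult_nonneg_nonneg add_nonneg_pos real_sqrt_ge_zero
          integral_nonneg_any) auto
  qed
  have V1: "0 \<le> (\<Sum>j=1..N. visc \<alpha> \<beta> C \<theta> xp (\<psi> t) (v t) (w t) (vt t) (wt t) j *
                        cint xp j (\<lambda>x. poly (pderiv (v t j)) x * poly (pderiv (v t j)) x))"
    unfolding cint_def by (intro sum_nonneg mult_nonneg_nonneg[OF viscnn integral_nonneg_any]) auto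
  have V2: "0 \<le> (\<Sum>j=1..N. visc \<alpha> \<beta> C \<theta> xp (\<psi> t) (v t) (w t) (vt t) (wt t) j *
                        cint xp j (\<lambda>x. poly (pderiv (w t j)) x * poly (pderiv (w t j)) x))"
    unfolding cint_def by (intro sum_nonneg mult_nonneg_nonneg[OF viscnn integral_nonneg_any]) auto
  have loc: "cavg \<alpha> \<beta> xp N (\<psi> t) j * trp xp N (w t) j * trp xp N (v t) j
       - cavg \<alpha> \<beta> xp N (\<psi> t) j * trm xp N (w t) j * trm xp N (v t) j
       + flux \<alpha> \<beta> xp N (\<psi> t) (w t) (v t) j * trm xp N (v t) j
       - flux \<alpha> \<beta> xp N (\<psi> t) (w t) (v t) j * trp xp N (v t) j
       + flux \<alpha> \<beta> xp N (\<psi> t) (v t) (w t) j * trm xp N (w t) j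
       - flux \<alpha> \<beta> xp N (\<psi> t) (v t) (w t) j * trp xp N (w t) j \<le> 0" for j
  proof -
    have s: "0 \<le> smax \<alpha> \<beta> xp N (\<psi> t) j"
      unfolding smax_def cm_def using cspeed_nonneg[OF ab] by (simp add: le_max_iff_disj)
    have "cavg \<alpha> \<beta> xp N (\<psi> t) j * trp xp N (w t) j * trp xp N (v t) j
       - cavg \<alpha> \<beta> xp N (\<psi> t) j * trm xp N (w t) j * trm xp N (v t) j
       + flux \<alpha> \<beta> xp N (\<psi> t) (w t) (v t) j * trm xp N (v t) j
       - flux \<alpha> \<beta> xp N (\<psi> t) (w t) (v t) j * trp xp N (v t) j
       + flux \<alpha> \<beta> xp N (\<psi> t) (v t) (w t) j * trm xp N (w t) j
       - flux \<alpha> \<beta> xp N (\<psi> t) (v t) (w t) j * trp xp N (w t) j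
       = - (smax \<alpha> \<beta> xp N (\<psi> t) j / 2) * ((jump xp N (v t) j)\<^sup>2 + (jump xp N (w t) j)\<^sup>2)"
      unfolding flux_def avg_def jump_def by (simp add: power2_eq_square field_simps)
    also have "\<dots> \<le> 0" using s by (intro mult_nonpos_nonneg) auto
    finally show ?thesis .
  qed
  have IF: "(\<Sum>j=1..N. cavg \<alpha> \<beta> xp N (\<psi> t) j * trp xp N (w t) j * trp xp N (v t) j)
       - (\<Sum>j=1..N. cavg \<alpha> \<beta> xp N (\<psi> t) j * trm xp N (w t) j * trm xp N (v t) j)
       + (\<Sum>j=1..N. flux \<alpha> \<beta> xp N (\<psi> t) (w t) (v t) j * trm xp N (v t) j)
       - (\<Sum>j=1..N. flux \<alpha> \<beta> xp N (\<psi> t) (w t) (v t) j * trp xp N (v t) j)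
       + (\<Sum>j=1..N. flux \<alpha> \<beta> xp N (\<psi> t) (v t) (w t) j * trm xp N (w t) j)
       - (\<Sum>j=1..N. flux \<alpha> \<beta> xp N (\<psi> t) (v t) (w t) j * trp xp N (w t) j) \<le> 0"
    unfolding sum_subtractf[symmetric] sum.distrib[symmetric] by (rule sum_nonpos) (rule loc)
  have "I1 + I2 \<le> 0"
    using e1 e2 KR sh1 sh2 sh3 V1 V2 IF unfolding I1_def I2_def by linarith
  with deriv Deq show "\<exists>D. ((\<lambda>s. \<Sum>j=1..N. cint xp j (\<lambda>x. ((poly (v s j) x)\<^sup>2 + (poly (w s j) x)\<^sup>2) / 2))
              has_real_derivative D) (at t within {0..T}) \<and> D \<le> 0" by auto
qed

end
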